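(* Let $\eta^+,\eta^-\in(0,1]$, $\eta_d=\frac1{\eta^-}-\eta^+$, $\mathbb{P}_\xi$ a probability measure on $[-1,1]$ with mean zero and cumulative distribution function $F$, $\varphi(z)=\int_{-1}^zF(\xi)\mathrm{d}\xi$, $\dot y(x^b,x^r)=\eta^+x^b-\eta_d x^r\varphi(-x^b/x^r)$ for $x^r>0$, $\dot y(x^b,0)=\eta^+x^b-\eta_d[x^b]^-$, $\dot y^\star\in\mathbb{R}$, and let $g:\mathbb{R}_+\to\mathbb{R}$ be the unique function with $\dot y(g(x^r),x^r)=\dot y^\star$ for all $x^r\ge0$ (it is convex, continuous and nondecreasing). Let $T>0$, $c^b>0$, $c^r\ge0$, and $\bar x^r\ge0$, and consider the problem $\min_{x^r\in[0,\bar x^r]} T\big(c^b g(x^r)-c^r x^r\big)$. Let $g'_+$ and $g'_-$ denote the right and left derivatives of $g$. Define $x^r_\ast$ as follows: if $\bar x^r=0$ or $g'_+(0)\ge c^r/c^b$, then $x^r_\ast=0$; if $\bar x^r>0$ and $g'_-(\bar x^r)<c^r/c^b$, then $x^r_\ast=\bar x^r$; otherwise (i.e. $\bar x^r>0$, $g'_+(0)<c^r/c^b\le g'_-(\bar x^r)$), $x^r_\ast=\min\mathcal{X}_\star$, where $\mathcal{X}_\star=\{x\in(0,\bar x^r]: g'_-(x)\le c^r/c^b\le g'_+(x)\}$ is nonempty and compact. Then $x^r_\ast$ is an optimal solution of the problem.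
   Context: $[a]^-=\max\{-a,0\}$. In the paper, $[0,\bar x^r]$ is the feasible set of the reduced battery bidding problem in the reserve variable $x^r$ (base power $x^b=g(x^r)$), $c^b$ is the price of base power and $c^r$ the reserve price; $\mathcal{X}_\star$ is the set of zeros of the net marginal cost $T(c^bg'(x^r)-c^r)$ in the subdifferential sense. *)

theory Defs
  imports "HOL-Probability.Probability"
begin

definition neg_part :: "real \<Rightarrow> real" where
  "neg_part a = max (- a) 0"

definition phi :: "real measure \<Rightarrow> real \<Rightarrow> real" where
  "phi M z = integral {-1..z} (cdf M)"

definition ydot :: "real \<Rightarrow> real \<Rightarrow> real measure \<Rightarrow> real \<Rightarrow> real \<Rightarrow> real" where
  "ydot etap etam M xb xr =
     (let etad = 1 / etam - etap in
      if xr > 0 then etap * xb - etad * xr * phi M (- xb / xr)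
      else etap * xb - etad * neg_part xb)"

definition rderiv :: "(real \<Rightarrow> real) \<Rightarrow> real \<Rightarrow> real" where
  "rderiv g x = Lim (at_right x) (\<lambda>y. (g y - g x) / (y - x))"

definition lderiv :: "(real \<Rightarrow> real) \<Rightarrow> real \<Rightarrow> real" where
  "lderiv g x = Lim (at_left x) (\<lambda>y. (g y - g x) / (y - x))"

end

theory Submission
  imports Defs
begin

lemma slope_sym: "((g::real\<Rightarrow>real) a - g b) / (a - b) = (g b - g a) / (b - a)"
  by (metis minus_diff_eq minus_divide_divide)

lemma slope_mono:
  fixes g :: "real \<Rightarrow> real"
  assumes cv: "convex_on {0..} g" and x: "0 \<le> x" and y: "0 \<le> y" "y < y'" "y \<noteq> x" "y' \<noteq> x"
  shows "(g y - g x) / (y - x) \<le> (g y' - g x) / (y' - x)"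
proof -
  consider "y < y'" "y' < x" | "y < x" "x < y'" | "x < y" "y < y'" using y by linarith
  then show ?thesis
  proof cases
    case 1
    then show ?thesis using convex_on_slope_le(2)[OF cv, of y x y'] x y
      by (simp add: slope_sym[of g])
  next
    case 2
    have a: "(g y - g x) / (y - x) \<le> (g y - g y') / (y - y')"
      using convex_on_slope_le(1)[OF cv, of y y' x] 2 x y by simp
    have b: "(g y - g y') / (y - y') \<le> (g x - g y') / (x - y')"
      using convex_on_slope_le(2)[OF cv, of y y' x] 2 x y by simp
    show ?thesis using a b by (simp add: slope_sym[of g])
  next
    case 3
    then show ?thesis using convex_on_slope_le(1)[OF cv, of x y' y] x y
      by (simp add: slope_sym[of g])
  qed
qed

lemma rderiv_Inf:
  fixes g :: "real \<Rightarrow> real"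
  assumes cv: "convex_on {0..} g" and m0: "\<And>x. x \<ge> 0 \<Longrightarrow> g 0 \<le> g x" and x: "0 \<le> x"
  shows "rderiv g x = Inf ((\<lambda>y. (g y - g x) / (y - x)) ` {x<..})"
    and "bdd_below ((\<lambda>y. (g y - g x) / (y - x)) ` {x<..})"
proof -
  obtain K where K: "\<And>a. x < a \<Longrightarrow> K \<le> (g a - g x) / (a - x)"
  proof (cases "x = 0")
    case True
    show ?thesis
      by (rule that[of 0]) (use True m0 in \<open>auto intro!: divide_nonneg_pos\<close>)
  next
    case False
    show ?thesis
      by (rule that[of "(g 0 - g x) / (0 - x)"]) (use False x slope_mono[OF cv, of x 0] in \<open>auto\<close>)
  qed
  have "((\<lambda>y. (g y - g x) / (y - x)) \<longlongrightarrow> Inf ((\<lambda>y. (g y - g x) / (y - x)) ` ({x<..} \<inter> UNIV))) (at x within ({x<..} \<inter> UNIV))"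
  proof (rule Lim_right_bound[where K=K])
    fix a b assume "a \<in> (UNIV::real set)" "b \<in> (UNIV::real set)" "x < a" "a \<le> b"
    then show "(g a - g x) / (a - x) \<le> (g b - g x) / (b - x)"
      using slope_mono[OF cv, of x a b] x by (cases "a = b") auto
  qed (use K in auto)
  then show "rderiv g x = Inf ((\<lambda>y. (g y - g x) / (y - x)) ` {x<..})"
    unfolding rderiv_def by (intro tendsto_Lim) auto
  show "bdd_below ((\<lambda>y. (g y - g x) / (y - x)) ` {x<..})"
    using K by (intro bdd_belowI2[where m=K]) auto
qed

lemma lderiv_Sup:
  fixes g :: "real \<Rightarrow> real"
  assumes cv: "convex_on {0..} g" and x: "0 < x"
  shows "lderiv g x = Sup ((\<lambda>y. (g y - g x) / (y - x)) ` {0..<x})"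
    and "bdd_above ((\<lambda>y. (g y - g x) / (y - x)) ` {0..<x})"
proof -
  define K where "K = (g (x+1) - g x) / ((x+1) - x)"
  have K: "\<And>b. 0 \<le> b \<Longrightarrow> b < x \<Longrightarrow> (g b - g x) / (b - x) \<le> K"
    unfolding K_def using x by (intro slope_mono[OF cv]) auto
  have "((\<lambda>y. (g y - g x) / (y - x)) \<longlongrightarrow> Sup ((\<lambda>y. (g y - g x) / (y - x)) ` ({..<x} \<inter> {0..}))) (at x within ({..<x} \<inter> {0..}))"
  proof (rule Lim_left_bound[where K=K])
    fix a b assume "a \<in> {0::real..}" "b \<in> {0::real..}" "b < x" "a \<le> b"
    then show "(g a - g x) / (a - x) \<le> (g b - g x) / (b - x)"
      using slope_mono[OF cv, of x a b] x by (cases "a = b") auto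
  qed (use K in auto)
  moreover have "at x within ({..<x} \<inter> {0..}) = at x within {..<x}"
    by (rule at_within_nhd[of _ "{0<..}"]) (use x in auto)
  moreover have "{..<x} \<inter> {0..} = {0..<x}" by auto
  ultimately show "lderiv g x = Sup ((\<lambda>y. (g y - g x) / (y - x)) ` {0..<x})"
    unfolding lderiv_def using x by (intro tendsto_Lim) auto
  show "bdd_above ((\<lambda>y. (g y - g x) / (y - x)) ` {0..<x})"
    using K by (intro bdd_aboveI2[where M=K]) auto
qed

lemma cont_g:
  fixes g :: "real \<Rightarrow> real"
  assumes cv: "convex_on {0..} g" and m0: "\<And>x. x \<ge> 0 \<Longrightarrow> g 0 \<le> g x"
  shows "continuous_on {0..b} g"
  unfolding continuous_on_eq_continuous_within
proof
  fix x assume x: "x \<in> {0..b}"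
  show "continuous (at x within {0..b}) g"
  proof (cases "x = 0")
    case False
    have "continuous_on {0<..} g"
      by (rule convex_on_continuous) (auto intro: convex_on_subset[OF cv])
    then have "isCont g x" using x False
      by (subst (asm) continuous_on_eq_continuous_at) auto
    then show ?thesis by (rule continuous_at_imp_continuous_within)
  next
    case True
    define G where "G = g 1 - g 0"
    have G: "G \<ge> 0" unfolding G_def using m0[of 1] by simp
    have bnd: "\<bar>g t - g 0\<bar> \<le> t * G" if t: "0 \<le> t" "t \<le> 1" for t
    proof -
      have "g ((1 - t) *\<^sub>R 0 + t *\<^sub>R 1) \<le> (1 - t) * g 0 + t * g 1"
        by (rule convex_onD[OF cv]) (use t in auto)
      then have "g t \<le> (1 - t) * g 0 + t * g 1" by simp
      moreover have "g 0 \<le> g t" using m0 t by simp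
      ultimately show ?thesis unfolding G_def by (simp add: algebra_simps)
    qed
    show ?thesis unfolding True continuous_within_eps_delta
    proof (intro allI impI)
      fix e :: real assume e: "e > 0"
      define d where "d = min 1 (e / (G + 1))"
      have d: "d > 0" using e G by (simp add: d_def)
      have "\<forall>x'\<in>{0..b}. dist x' 0 < d \<longrightarrow> dist (g x') (g 0) < e"
      proof (intro ballI impI)
        fix t assume t: "t \<in> {0..b}" "dist t 0 < d"
        then have t0: "0 \<le> t" "t < d" by (auto simp: dist_real_def)
        then have t1: "t \<le> 1" by (simp add: d_def)
        have "t * G \<le> t * (G + 1)" using t0 by (simp add: mult_left_mono)
        also have "\<dots> < d * (G + 1)" using t0 G by (intro mult_strict_right_mono) auto
        also have "\<dots> \<le> e / (G + 1) * (G + 1)" using G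
          by (intro mult_right_mono) (auto simp: d_def)
        also have "\<dots> = e" using G by simp
        finally show "dist (g t) (g 0) < e"
          using bnd[OF t0(1) t1] by (simp add: dist_real_def)
      qed
      then show "\<exists>d>0. \<forall>x'\<in>{0..b}. dist x' 0 < d \<longrightarrow> dist (g x') (g 0) < e"
        using d by blast
    qed
  qed
qed

lemma sl_right: "(x::real) < y \<Longrightarrow> c \<le> (g y - g x) / (y - x) \<longleftrightarrow> g x - c * x \<le> g y - c * y"
  by (simp add: pos_le_divide_eq algebra_simps)

lemma sl_left: "(y::real) < x \<Longrightarrow> (g y - g x) / (y - x) \<le> c \<longleftrightarrow> g x - c * x \<le> g y - c * y"
  by (simp add: neg_divide_le_eq algebra_simps)

lemma opt_abstract:
  fixes g :: "real \<Rightarrow> real" and c xbar :: real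
  assumes cv: "convex_on {0..} g" and m0: "\<And>x. x \<ge> 0 \<Longrightarrow> g 0 \<le> g x" and xb: "xbar \<ge> 0"
  defines "xs \<equiv>
     (if xbar = 0 \<or> rderiv g 0 \<ge> c then 0
      else if xbar > 0 \<and> lderiv g xbar < c then xbar
      else (LEAST x. x \<in> {x. 0 < x \<and> x \<le> xbar \<and> lderiv g x \<le> c \<and> c \<le> rderiv g x}))"
  shows "xs \<in> {0..xbar} \<and> (\<forall>x\<in>{0..xbar}. g xs - c * xs \<le> g x - c * x)"
proof -
  let ?q = "\<lambda>x y. (g y - g x) / (y - x)"
  have R1: "rderiv g x \<le> ?q x y" if "0 \<le> x" "x < y" for x y
    using rderiv_Inf[OF cv m0 that(1)] that by (auto intro!: cInf_lower)
  have R2: "\<exists>y>x. ?q x y < c" if "0 \<le> x" "rderiv g x < c" for x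
    using rderiv_Inf[OF cv m0 that(1)] that by (auto simp: cInf_less_iff)
  have L1: "?q x y \<le> lderiv g x" if "0 < x" "0 \<le> y" "y < x" for x y
    using lderiv_Sup[OF cv that(1)] that by (auto intro!: cSup_upper)
  have L2: "lderiv g x \<le> rderiv g x" if x: "0 < x" for x
  proof -
    have "?q x y \<le> Inf ((\<lambda>y. (g y - g x) / (y - x)) ` {x<..})" if "0 \<le> y" "y < x" for y
    proof (rule cInf_greatest)
      show "(\<lambda>y. (g y - g x) / (y - x)) ` {x<..} \<noteq> {}" by auto
    next
      fix z assume "z \<in> (\<lambda>y. (g y - g x) / (y - x)) ` {x<..}"
      then obtain y' where "y' > x" "z = ?q x y'" by auto
      then show "?q x y \<le> z" using slope_mono[OF cv, of x y y'] that x by auto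
    qed
    then have "\<forall>y\<in>{0..<x}. ?q x y \<le> rderiv g x"
      using rderiv_Inf(1)[OF cv m0 less_imp_le[OF x]] by auto
    then show ?thesis unfolding lderiv_Sup(1)[OF cv x]
      using x by (intro cSup_least) auto
  qed
  let ?h = "\<lambda>x. g x - c * x"
  have glob: "?h x \<le> ?h y" if "0 < x" "lderiv g x \<le> c" "c \<le> rderiv g x" "0 \<le> y" for x y
  proof -
    consider "y < x" | "y = x" | "x < y" by linarith
    then show ?thesis
    proof cases
      case 1
      then show ?thesis using L1[of x y] that sl_left[of y x g c] by linarith
    next
      case 3
      then show ?thesis using R1[of x y] that sl_right[of x y c g] by linarith
    qed simp
  qed
  show ?thesis
  proof (cases "xbar = 0 \<or> rderiv g 0 \<ge> c")
    case A: True
    then have xs: "xs = 0" by (simp add: xs_def)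
    show ?thesis unfolding xs
    proof (intro conjI ballI)
      fix x assume x: "x \<in> {0..xbar}"
      show "?h 0 \<le> ?h x"
      proof (cases "x = 0")
        case False
        then have "0 < x" "xbar \<noteq> 0" using x by auto
        then show ?thesis using A R1[of 0 x] sl_right[of 0 x c g] by auto
      qed simp
    qed (use xb in auto)
  next
    case nA: False
    show ?thesis
    proof (cases "xbar > 0 \<and> lderiv g xbar < c")
      case B: True
      then have xs: "xs = xbar" using nA by (simp add: xs_def)
      show ?thesis unfolding xs
      proof (intro conjI ballI)
        fix x assume x: "x \<in> {0..xbar}"
        show "?h xbar \<le> ?h x"
        proof (cases "x = xbar")
          case False
          then have "x < xbar" using x by auto
          then show ?thesis using B L1[of xbar x] x sl_left[of x xbar g c] by auto
        qed simp
      qed (use xb in auto)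
    next
      case nB: False
      have xbp: "xbar > 0" and r0: "rderiv g 0 < c" and lx: "c \<le> lderiv g xbar"
        using nA nB xb by auto
      have xs: "xs = (LEAST x. x \<in> {x. 0 < x \<and> x \<le> xbar \<and> lderiv g x \<le> c \<and> c \<le> rderiv g x})"
        unfolding xs_def by (simp only: if_not_P[OF nA] if_not_P[OF nB])
      have contg: "continuous_on {0..xbar} g" by (rule cont_g[OF cv m0])
      then have conth: "continuous_on {0..xbar} ?h"
        by (intro continuous_intros)
      obtain m where m: "m \<in> {0..xbar}" "\<forall>y\<in>{0..xbar}. ?h m \<le> ?h y"
        using continuous_attains_inf[OF compact_Icc _ conth] xb by auto
      define A where "A = {x \<in> {0..xbar}. ?h x = ?h m}"
      have "closed A" unfolding A_def
        by (rule continuous_closed_preimage_constant[OF conth]) auto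
      moreover have "bounded A" unfolding A_def
        by (rule bounded_subset[of "{0..xbar}"]) auto
      ultimately have "compact A" by (simp add: compact_eq_bounded_closed)
      moreover have "A \<noteq> {}" using m by (auto simp: A_def)
      ultimately obtain a where a: "a \<in> A" "\<forall>t\<in>A. a \<le> t"
        using compact_attains_inf by blast
      have a0: "0 \<le> a" "a \<le> xbar" and amin: "\<forall>y\<in>{0..xbar}. ?h a \<le> ?h y"
        using a m by (auto simp: A_def)
      obtain y where y: "y > 0" "?q 0 y < c" using R2[of 0] r0 by auto
      define y' where "y' = min y xbar"
      have y'0: "0 < y'" "y' \<le> xbar" using y xbp by (auto simp: y'_def)
      have "?q 0 y' \<le> ?q 0 y"
      proof (cases "y' = y")
        case False
        then have "y' < y" by (auto simp: y'_def)
        then show ?thesis using slope_mono[OF cv, of 0 y' y] y'0 by auto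
      qed simp
      then have "\<not> ?h 0 \<le> ?h y'" using y y'0 sl_right[of 0 y' c g] by linarith
      then have apos: "a > 0" using amin y'0 a0 by (cases "a = 0") auto
      have la: "lderiv g a \<le> c"
        unfolding lderiv_Sup(1)[OF cv apos]
      proof (rule cSup_least)
        show "(\<lambda>y. (g y - g a) / (y - a)) ` {0..<a} \<noteq> {}" using apos by auto
      next
        fix z assume "z \<in> (\<lambda>y. (g y - g a) / (y - a)) ` {0..<a}"
        then obtain t where t: "0 \<le> t" "t < a" "z = ?q a t" by auto
        then show "z \<le> c" using amin a0 sl_left[of t a g c] by auto
      qed
      have ra: "c \<le> rderiv g a"
      proof (cases "a = xbar")
        case True
        then show ?thesis using lx L2[OF apos] by simp
      next
        case False
        then have axb: "a < xbar" using a0 by simp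
        have qx: "c \<le> ?q a xbar" using amin axb xb sl_right[of a xbar c g] by auto
        have "c \<le> Inf ((\<lambda>y. (g y - g a) / (y - a)) ` {a<..})"
        proof (rule cInf_greatest)
          show "(\<lambda>y. (g y - g a) / (y - a)) ` {a<..} \<noteq> {}" by auto
        next
          fix z assume "z \<in> (\<lambda>y. (g y - g a) / (y - a)) ` {a<..}"
          then obtain t where t: "a < t" "z = ?q a t" by auto
          show "c \<le> z"
          proof (cases "t \<le> xbar")
            case True
            then show ?thesis using t amin a0 sl_right[of a t c g] by auto
          next
            case False
            then show ?thesis using t qx slope_mono[OF cv, of a xbar t] axb apos by auto
          qed
        qed
        then show ?thesis using rderiv_Inf(1)[OF cv m0 a0(1)] by simp
      qed
      have least: "(LEAST x. x \<in> {x. 0 < x \<and> x \<le> xbar \<and> lderiv g x \<le> c \<and> c \<le> rderiv g x}) = a"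
      proof (rule Least_equality)
        show "a \<in> {x. 0 < x \<and> x \<le> xbar \<and> lderiv g x \<le> c \<and> c \<le> rderiv g x}"
          using apos a0 la ra by auto
      next
        fix x assume "x \<in> {x. 0 < x \<and> x \<le> xbar \<and> lderiv g x \<le> c \<and> c \<le> rderiv g x}"
        then have x: "0 < x" "x \<le> xbar" "lderiv g x \<le> c" "c \<le> rderiv g x" by auto
        have "?h x \<le> ?h m" using glob[OF x(1,3,4)] m by auto
        moreover have "?h m \<le> ?h x" using m x by auto
        ultimately have "x \<in> A" using x by (auto simp: A_def)
        then show "a \<le> x" using a by auto
      qed
      show ?thesis unfolding xs least using a0 amin by auto
    qed
  qed
qed


lemma phi_repr:
  assumes P: "prob_space M" and S: "sets M = sets borel" and one: "measure M {-1..1} = 1"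
    and I: "integrable M (\<lambda>x. x)"
  shows "phi M z = (\<integral>\<xi>. max (z - \<xi>) 0 \<partial>M)"
proof -
  interpret prob_space M by fact
  interpret pair_sigma_finite lborel M ..
  note SM[measurable_cong] = S
  have AE: "AE \<xi> in M. \<xi> \<in> {-1..1}" by (rule AE_prob_1) (use one in simp)
  define E where "E = (\<integral>\<xi>. max (z - \<xi>) 0 \<partial>M)"
  have intE: "integrable M (\<lambda>\<xi>. max (z - \<xi>) 0)"
  proof (intro integrable_max)
    show "integrable M (\<lambda>\<xi>. z - \<xi>)" using Bochner_Integration.integrable_diff[OF integrable_const[of z] I] by simp
  qed auto
  have E0: "E \<ge> 0" unfolding E_def by (rule Bochner_Integration.integral_nonneg) auto
  define f where "f = (\<lambda>(x::real) (y::real). ennreal (if -1 \<le> x \<and> x \<le> z \<and> y \<le> x then 1 else 0))"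
  have fm: "case_prod f \<in> borel_measurable (lborel \<Otimes>\<^sub>M M)"
    unfolding f_def by measurable
  have e1: "(\<integral>\<^sup>+\<xi>. ennreal (max (z - \<xi>) 0) \<partial>M) = ennreal E"
    unfolding E_def by (rule nn_integral_eq_integral[OF intE]) auto
  have "(\<integral>\<^sup>+\<xi>. ennreal (max (z - \<xi>) 0) \<partial>M) = (\<integral>\<^sup>+\<xi>. (\<integral>\<^sup>+t. f t \<xi> \<partial>lborel) \<partial>M)"
  proof (rule nn_integral_cong_AE)
    show "AE \<xi> in M. ennreal (max (z - \<xi>) 0) = (\<integral>\<^sup>+t. f t \<xi> \<partial>lborel)"
      using AE
    proof eventually_elim
      case (elim \<xi>)
      have "(\<integral>\<^sup>+t. f t \<xi> \<partial>lborel) = (\<integral>\<^sup>+t. indicator {\<xi>..z} t \<partial>lborel)"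
        using elim by (intro nn_integral_cong) (auto simp: f_def indicator_def)
      also have "\<dots> = emeasure lborel {\<xi>..z}" by simp
      also have "\<dots> = ennreal (max (z - \<xi>) 0)"
        by (cases "\<xi> \<le> z") auto
      finally show ?case ..
    qed
  qed
  also have "\<dots> = (\<integral>\<^sup>+t. (\<integral>\<^sup>+\<xi>. f t \<xi> \<partial>M) \<partial>lborel)"
    by (rule Fubini'[OF fm])
  also have "\<dots> = (\<integral>\<^sup>+t. ennreal (indicator {-1..z} t * cdf M t) \<partial>lborel)"
  proof (rule nn_integral_cong)
    fix t :: real
    have "(\<integral>\<^sup>+\<xi>. f t \<xi> \<partial>M) = (\<integral>\<^sup>+\<xi>. ennreal (indicator {-1..z} t) * indicator {..t} \<xi> \<partial>M)"
      by (intro nn_integral_cong) (auto simp: f_def indicator_def)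
    also have "\<dots> = ennreal (indicator {-1..z} t) * emeasure M {..t}"
      by (subst nn_integral_cmult) (auto simp: S)
    also have "\<dots> = ennreal (indicator {-1..z} t * cdf M t)"
      by (simp add: cdf_def2 emeasure_eq_measure ennreal_mult)
    finally show "(\<integral>\<^sup>+\<xi>. f t \<xi> \<partial>M) = ennreal (indicator {-1..z} t * cdf M t)" .
  qed
  finally have nn: "(\<integral>\<^sup>+t. ennreal (indicator {-1..z} t * cdf M t) \<partial>lborel) = ennreal E"
    using e1 by simp
  interpret finite_borel_measure M
    by unfold_locales (simp add: S)
  have cdfm: "cdf M \<in> borel_measurable borel"
    by (rule borel_measurable_mono) (simp add: mono_def cdf_nondecreasing)
  have hi: "((\<lambda>t. indicator {-1..z} t * cdf M t) has_integral E) UNIV"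
  proof (rule nn_integral_has_integral)
    show "(\<lambda>t. indicator {-1..z} t * cdf M t) \<in> borel_measurable borel"
      using cdfm by measurable
  qed (use nn E0 cdf_nonneg in auto)
  then have "(cdf M has_integral E) {-1..z}"
  proof (subst has_integral_restrict_UNIV[symmetric])
    have "(\<lambda>t. indicator {-1..z} t * cdf M t) = (\<lambda>x. if x \<in> {-1..z} then cdf M x else 0)"
      by (auto simp: indicator_def)
    with hi
    show "((\<lambda>x. if x \<in> {-1..z} then cdf M x else 0) has_integral E) UNIV" by simp
  qed
  then show ?thesis unfolding phi_def E_def by (rule integral_unique)
qed


lemma neg_part_convex:
  assumes "0 \<le> u" "u \<le> 1"
  shows "neg_part (u * p + (1 - u) * q) \<le> u * neg_part p + (1 - u) * neg_part q"
proof -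
  have np: "neg_part p \<ge> 0" "neg_part p \<ge> - p" "neg_part q \<ge> 0" "neg_part q \<ge> - q"
    by (auto simp: neg_part_def)
  have a: "u * neg_part p \<ge> 0" "u * neg_part p \<ge> u * (- p)"
    using assms np by (simp, intro mult_left_mono) auto
  have b: "(1 - u) * neg_part q \<ge> 0" "(1 - u) * neg_part q \<ge> (1 - u) * (- q)"
    using assms np by (simp, intro mult_left_mono) auto
  show ?thesis using a b by (simp add: neg_part_def)
qed

lemma neg_part_ge: "neg_part p \<ge> 0" "neg_part p \<ge> - p"
  by (auto simp: neg_part_def)

lemma neg_part_anti: "p \<le> q \<Longrightarrow> neg_part q \<le> neg_part p"
  by (auto simp: neg_part_def)

lemma max_scale: "(r::real) \<ge> 0 \<Longrightarrow> r * max a 0 = max (r * a) 0"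
  unfolding max_def by (smt (verit) mult_nonneg_nonneg mult_nonneg_nonpos)

locale psi_setup =
  fixes M :: "real measure"
  assumes P: "prob_space M" and S: "sets M = sets borel" and one: "measure M {-1..1} = 1"
    and I: "integrable M (\<lambda>x. x)" and mean: "(\<integral>x. x \<partial>M) = 0"
begin

definition Psi :: "real \<Rightarrow> real \<Rightarrow> real" where
  "Psi b r = (\<integral>\<xi>. neg_part (b + r * \<xi>) \<partial>M)"

lemma int_lin: "integrable M (\<lambda>\<xi>. b + r * \<xi>)"
proof -
  interpret prob_space M by (rule P)
  show ?thesis
    using Bochner_Integration.integrable_add[OF integrable_const[of b] integrable_mult_right[OF I, of r]]
    by simp
qed

lemma int_lin_eq: "(\<integral>\<xi>. b + r * \<xi> \<partial>M) = b"
proof -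
  interpret prob_space M by (rule P)
  have "(\<integral>\<xi>. b + r * \<xi> \<partial>M) = (\<integral>\<xi>. b \<partial>M) + (\<integral>\<xi>. r * \<xi> \<partial>M)"
    by (rule Bochner_Integration.integral_add) (use integrable_mult_right[OF I, of r] in auto)
  also have "\<dots> = b" using mean by (simp add: prob_space)
  finally show ?thesis .
qed

lemma int_psi: "integrable M (\<lambda>\<xi>. neg_part (b + r * \<xi>))"
proof -
  interpret prob_space M by (rule P)
  have "integrable M (\<lambda>\<xi>. max (- (b + r * \<xi>)) 0)"
    by (intro integrable_max integrable_minus int_lin) auto
  then show ?thesis by (simp add: neg_part_def)
qed

lemma Psi_zero: "Psi b 0 = neg_part b"
proof -
  interpret prob_space M by (rule P)
  show ?thesis by (simp add: Psi_def prob_space)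
qed

lemma Psi_anti: "b \<le> b' \<Longrightarrow> Psi b' r \<le> Psi b r"
  unfolding Psi_def
  by (intro integral_mono int_psi neg_part_anti) (auto simp: mult_left_mono)

lemma Psi_lower: "neg_part b \<le> Psi b r"
proof -
  have "0 \<le> Psi b r" unfolding Psi_def
    by (rule Bochner_Integration.integral_nonneg) (simp add: neg_part_ge)
  moreover have "(\<integral>\<xi>. - (b + r * \<xi>) \<partial>M) \<le> Psi b r" unfolding Psi_def
    by (intro integral_mono int_psi integrable_minus int_lin neg_part_ge)
  moreover have "(\<integral>\<xi>. - (b + r * \<xi>) \<partial>M) = - b"
    by (subst Bochner_Integration.integral_minus) (simp add: int_lin_eq)
  ultimately show ?thesis by (simp add: neg_part_def)
qed

lemma Psi_convex:
  assumes "0 \<le> u" "u \<le> 1"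
  shows "Psi (u * b1 + (1 - u) * b2) (u * r1 + (1 - u) * r2) \<le> u * Psi b1 r1 + (1 - u) * Psi b2 r2"
proof -
  have "Psi (u * b1 + (1 - u) * b2) (u * r1 + (1 - u) * r2)
      \<le> (\<integral>\<xi>. u * neg_part (b1 + r1 * \<xi>) + (1 - u) * neg_part (b2 + r2 * \<xi>) \<partial>M)"
    unfolding Psi_def
  proof (intro integral_mono int_psi Bochner_Integration.integrable_add integrable_mult_right)
    fix \<xi>
    have "(u * b1 + (1 - u) * b2) + (u * r1 + (1 - u) * r2) * \<xi>
        = u * (b1 + r1 * \<xi>) + (1 - u) * (b2 + r2 * \<xi>)" by (simp add: algebra_simps)
    then show "neg_part (u * b1 + (1 - u) * b2 + (u * r1 + (1 - u) * r2) * \<xi>)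
        \<le> u * neg_part (b1 + r1 * \<xi>) + (1 - u) * neg_part (b2 + r2 * \<xi>)"
      using neg_part_convex[OF assms] by simp
  qed
  also have "\<dots> = u * Psi b1 r1 + (1 - u) * Psi b2 r2"
    unfolding Psi_def
    by (subst Bochner_Integration.integral_add) (auto intro!: integrable_mult_right int_psi)
  finally show ?thesis .
qed

lemma ydot_repr:
  assumes "0 \<le> r"
  shows "ydot etap etam M b r = etap * b - (1 / etam - etap) * Psi b r"
proof (cases "r = 0")
  case True
  then show ?thesis by (simp add: ydot_def Psi_zero)
next
  case False
  then have r: "r > 0" using assms by simp
  have "r * phi M (- b / r) = r * (\<integral>\<xi>. max (- b / r - \<xi>) 0 \<partial>M)"
    using phi_repr[OF P S one I] by simp
  also have "\<dots> = (\<integral>\<xi>. r * max (- b / r - \<xi>) 0 \<partial>M)" by simp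
  also have "\<dots> = Psi b r" unfolding Psi_def
  proof (rule Bochner_Integration.integral_cong[OF refl])
    fix \<xi>
    have "r * (- b / r - \<xi>) = - (b + r * \<xi>)" using r by (simp add: field_simps)
    then show "r * max (- b / r - \<xi>) 0 = neg_part (b + r * \<xi>)"
      using max_scale[of r "- b / r - \<xi>"] r by (simp add: neg_part_def)
  qed
  finally show ?thesis using r by (simp add: ydot_def Let_def mult.assoc)
qed

end

theorem theorem2:
  fixes etap etam ystar T cb cr xbar :: real
    and M :: "real measure" and g :: "real \<Rightarrow> real"
  assumes "0 < etap" "etap \<le> 1" "0 < etam" "etam \<le> 1"
    and "prob_space M" "sets M = sets borel" "measure M {-1..1} = 1"
    and "integrable M (\<lambda>x. x)" "(\<integral>x. x \<partial>M) = 0"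
    and g: "\<forall>xr\<ge>0. ydot etap etam M (g xr) xr = ystar"
    and "T > 0" "cb > 0" "cr \<ge> 0" "xbar \<ge> 0"
  defines "xs \<equiv>
     (if xbar = 0 \<or> rderiv g 0 \<ge> cr / cb then 0
      else if xbar > 0 \<and> lderiv g xbar < cr / cb then xbar
      else (LEAST x. x \<in> {x. 0 < x \<and> x \<le> xbar \<and> lderiv g x \<le> cr / cb \<and> cr / cb \<le> rderiv g x}))"
  shows "xs \<in> {0..xbar} \<and>
         (\<forall>x\<in>{0..xbar}. T * (cb * g xs - cr * xs) \<le> T * (cb * g x - cr * x))"
proof -
  interpret psi_setup M
    by (rule psi_setup.intro) (rule assms)+
  define ed where "ed = 1 / etam - etap"
  have ed: "ed \<ge> 0"
  proof -
    have "1 \<le> 1 / etam" using assms(3,4) by (simp add: field_simps)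
    then show ?thesis using assms(2) by (simp add: ed_def)
  qed
  define Y where "Y b r = etap * b - ed * Psi b r" for b r
  have Yg: "Y (g r) r = ystar" if "r \<ge> 0" for r
    using g that ydot_repr[OF that, of etap etam "g r"] by (simp add: Y_def ed_def)
  have Ymono: "Y b r < Y b' r" if "b < b'" for b b' r
  proof -
    have "ed * Psi b' r \<le> ed * Psi b r" using Psi_anti[of b b' r] that ed
      by (simp add: mult_left_mono)
    moreover have "etap * b < etap * b'" using that assms(1) by simp
    ultimately show ?thesis by (simp add: Y_def)
  qed
  have cv: "convex_on {0..} g"
    unfolding convex_on_alt
  proof (intro conjI ballI allI impI)
    fix x y :: real and u :: real
    assume x: "x \<in> {0..}" and y: "y \<in> {0..}" and u: "u \<ge> 0 \<and> u \<le> 1"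
    define zr where "zr = u * x + (1 - u) * y"
    define b where "b = u * g x + (1 - u) * g y"
    have zr: "zr \<ge> 0" using x y u by (auto simp: zr_def)
    have "ed * Psi b zr \<le> ed * (u * Psi (g x) x + (1 - u) * Psi (g y) y)"
      unfolding b_def zr_def using Psi_convex[of u "g x" "g y" x y] u ed
      by (intro mult_left_mono) auto
    then have "u * Y (g x) x + (1 - u) * Y (g y) y \<le> Y b zr"
      by (simp add: Y_def b_def algebra_simps)
    then have "ystar \<le> Y b zr" using Yg x y by (simp add: algebra_simps)
    then have "\<not> g zr > b" using Ymono[of b "g zr" zr] Yg[OF zr] by linarith
    then show "g (u *\<^sub>R x + (1 - u) *\<^sub>R y) \<le> u * g x + (1 - u) * g y"
      by (simp add: zr_def b_def)
  qed auto
  have m0: "g 0 \<le> g x" if x: "x \<ge> 0" for x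
  proof (rule ccontr)
    assume "\<not> g 0 \<le> g x"
    then have "Y (g x) x < Y (g 0) x" by (intro Ymono) simp
    moreover have "Y (g 0) x \<le> Y (g 0) 0"
      using Psi_lower[of "g 0" x] ed by (simp add: Y_def Psi_zero mult_left_mono)
    ultimately show False using Yg[OF x] Yg[of 0] by simp
  qed
  have opt: "xs \<in> {0..xbar} \<and> (\<forall>x\<in>{0..xbar}. g xs - cr / cb * xs \<le> g x - cr / cb * x)"
    unfolding xs_def by (rule opt_abstract[OF cv m0 assms(14), where c="cr / cb"])
  show ?thesis
  proof (intro conjI ballI)
    show "xs \<in> {0..xbar}" using opt by simp
  next
    fix x assume "x \<in> {0..xbar}"
    then have "g xs - cr / cb * xs \<le> g x - cr / cb * x" using opt by simp
    then have "cb * (g xs - cr / cb * xs) \<le> cb * (g x - cr / cb * x)"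
      using assms(12) by (simp add: mult_left_mono)
    then have "cb * g xs - cr * xs \<le> cb * g x - cr * x"
      using assms(12) by (simp add: algebra_simps)
    then show "T * (cb * g xs - cr * xs) \<le> T * (cb * g x - cr * x)"
      using assms(11) by (simp add: mult_left_mono)
  qed
qed

end
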